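(* Let $\{\bm{y}_m\}_{m=1}^N\subseteq\mathbb{R}^p$ and let $\{\bm{x}'_j\}_{j=1}^n\subseteq\mathbb{R}^p$ be pairwise distinct with $\bm{x}'_i\ne\bm{y}_m$ for all $i,m$. Define, for $\bm{x}_1,\dots,\bm{x}_n\in\mathbb{R}^p$, $h^Q(\{\bm{x}_i\};\{\bm{x}'_j\}) = \frac{2}{nN}\sum_{i=1}^n\sum_{m=1}^N\left\{\frac{\|\bm{y}_m-\bm{x}_i\|_2^2}{2\|\bm{y}_m-\bm{x}'_i\|_2} + \frac{\|\bm{y}_m-\bm{x}'_i\|_2}{2}\right\} - \frac{1}{n^2}\sum_{i=1}^n\sum_{j\ne i}\left(\|\bm{x}'_i-\bm{x}'_j\|_2 + \frac{2(\bm{x}_i-\bm{x}'_i)^T(\bm{x}'_i-\bm{x}'_j)}{\|\bm{x}'_i-\bm{x}'_j\|_2}\right).$ Then $h^Q(\cdot;\{\bm{x}'_j\})$ majorizes $\hat E$ at $\{\bm{x}'_j\}_{j=1}^n$, i.e. $h^Q(\{\bm{x}_i\};\{\bm{x}'_j\})\ge\hat E(\{\bm{x}_i\};\{\bm{y}_m\})$ for all $(\bm{x}_1,\dots,\bm{x}_n)$, with equality at $\bm{x}_i=\bm{x}'_i$. Moreover, the global minimizer of $h^Q(\cdot;\{\bm{x}'_j\})$ is given by $\bm{x}_i = \left(\sum_{m=1}^N\|\bm{x}'_i-\bm{y}_m\|_2^{-1}\right)^{-1}\left(\frac{N}{n}\sum_{j\ne i}\frac{\bm{x}'_i-\bm{x}'_j}{\|\bm{x}'_i-\bm{x}'_j\|_2}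 + \sum_{m=1}^N\frac{\bm{y}_m}{\|\bm{x}'_i-\bm{y}_m\|_2}\right),\quad i=1,\dots,n.$
   Context: $\hat E(\{\bm{x}_i\};\{\bm{y}_m\}) = \frac{2}{nN}\sum_{i=1}^n\sum_{m=1}^N\|\bm{y}_m-\bm{x}_i\|_2 - \frac{1}{n^2}\sum_{i=1}^n\sum_{j=1}^n\|\bm{x}_i-\bm{x}_j\|_2$, viewed as a function of $(\bm{x}_1,\dots,\bm{x}_n)\in(\mathbb{R}^p)^n$. *)

theory Defs
  imports "HOL-Analysis.Analysis"
begin

definition Ehat :: "nat \<Rightarrow> nat \<Rightarrow> (nat \<Rightarrow> 'a::euclidean_space) \<Rightarrow> (nat \<Rightarrow> 'a) \<Rightarrow> real" where
  "Ehat n N y x =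
     2 / (real n * real N) * (\<Sum>i=1..n. \<Sum>m=1..N. norm (y m - x i))
     - 1 / (real n)^2 * (\<Sum>i=1..n. \<Sum>j=1..n. norm (x i - x j))"

definition hQ :: "nat \<Rightarrow> nat \<Rightarrow> (nat \<Rightarrow> 'a::euclidean_space) \<Rightarrow> (nat \<Rightarrow> 'a) \<Rightarrow> (nat \<Rightarrow> 'a) \<Rightarrow> real" where
  "hQ n N y x' x =
     2 / (real n * real N) * (\<Sum>i=1..n. \<Sum>m=1..N.
        (norm (y m - x i))^2 / (2 * norm (y m - x' i)) + norm (y m - x' i) / 2)
     - 1 / (real n)^2 * (\<Sum>i=1..n. \<Sum>j\<in>{1..n} - {i}.
        norm (x' i - x' j) + 2 * ((x i - x' i) \<bullet> (x' i - x' j)) / norm (x' i - x' j))"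

definition hQ_min :: "nat \<Rightarrow> nat \<Rightarrow> (nat \<Rightarrow> 'a::euclidean_space) \<Rightarrow> (nat \<Rightarrow> 'a) \<Rightarrow> nat \<Rightarrow> 'a" where
  "hQ_min n N y x' i =
     inverse (\<Sum>m=1..N. inverse (norm (x' i - y m))) *\<^sub>R
       ((real N / real n) *\<^sub>R (\<Sum>j\<in>{1..n} - {i}. (1 / norm (x' i - x' j)) *\<^sub>R (x' i - x' j))
        + (\<Sum>m=1..N. (1 / norm (x' i - y m)) *\<^sub>R y m))"

end

theory Submission imports Defs begin
lemma expand:
  fixes y w :: "nat \<Rightarrow> 'a::real_inner" and z p :: 'a
  assumes fM: "finite M" and fJ: "finite J" and apos: "\<forall>m\<in>M. a m > 0"
  shows "A * (\<Sum>m\<in>M. (norm (y m - z))^2 / (2 * a m) + a m / 2)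
       - B * (\<Sum>j\<in>J. d j + 2 * ((z - p) \<bullet> w j) / d j)
     = (A * (\<Sum>m\<in>M. 1 / a m) / 2) * (norm z)^2
       - z \<bullet> (A *\<^sub>R (\<Sum>m\<in>M. (1 / a m) *\<^sub>R y m) + (2*B) *\<^sub>R (\<Sum>j\<in>J. (1 / d j) *\<^sub>R w j))
       + (A * (\<Sum>m\<in>M. (norm (y m))^2 / (2 * a m) + a m / 2)
          - B * (\<Sum>j\<in>J. d j - 2 * (p \<bullet> w j) / d j))"
proof -
  have e1: "(\<Sum>m\<in>M. (norm (y m - z))^2 / (2 * a m) + a m / 2)
     = (\<Sum>m\<in>M. 1 / a m) / 2 * (norm z)^2 - z \<bullet> (\<Sum>m\<in>M. (1 / a m) *\<^sub>R y m)
       + (\<Sum>m\<in>M. (norm (y m))^2 / (2 * a m) + a m / 2)"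
  proof -
    have "\<And>m. m \<in> M \<Longrightarrow> (norm (y m - z))^2 / (2 * a m) + a m / 2
        = (1 / a m) / 2 * (norm z)^2 - z \<bullet> ((1 / a m) *\<^sub>R y m) + ((norm (y m))^2 / (2 * a m) + a m / 2)"
    proof -
      fix m assume "m \<in> M" hence "a m > 0" using apos by auto
      have eq: "(norm (y m - z))^2 = (norm (y m))^2 - 2 * (z \<bullet> y m) + (norm z)^2"
        by (simp add: power2_norm_eq_inner inner_diff_left inner_diff_right inner_commute)
      show "(norm (y m - z))^2 / (2 * a m) + a m / 2
        = (1 / a m) / 2 * (norm z)^2 - z \<bullet> ((1 / a m) *\<^sub>R y m) + ((norm (y m))^2 / (2 * a m) + a m / 2)"
        unfolding eq using \<open>a m > 0\<close> by (simp add: field_simps)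
    qed
    hence "(\<Sum>m\<in>M. (norm (y m - z))^2 / (2 * a m) + a m / 2)
      = (\<Sum>m\<in>M. (1 / a m) / 2 * (norm z)^2 - z \<bullet> ((1 / a m) *\<^sub>R y m) + ((norm (y m))^2 / (2 * a m) + a m / 2))"
      by (rule sum.cong[OF refl])
    also have "\<dots> = (\<Sum>m\<in>M. 1 / a m) / 2 * (norm z)^2 - z \<bullet> (\<Sum>m\<in>M. (1 / a m) *\<^sub>R y m)
       + (\<Sum>m\<in>M. (norm (y m))^2 / (2 * a m) + a m / 2)"
    proof -
      have h: "(\<Sum>m\<in>M. (1/a m)/2*(norm z)^2) = (\<Sum>m\<in>M. 1/a m)/2*(norm z)^2"
        by (simp add: sum_distrib_right sum_divide_distrib)
      show ?thesis
      unfolding sum.distrib sum_subtractf inner_sum_right[symmetric] h ..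
    qed
    finally show ?thesis .
  qed
  have e2: "(\<Sum>j\<in>J. d j + 2 * ((z - p) \<bullet> w j) / d j)
     = 2 * (z \<bullet> (\<Sum>j\<in>J. (1 / d j) *\<^sub>R w j)) + (\<Sum>j\<in>J. d j - 2 * (p \<bullet> w j) / d j)"
  proof -
    have "(\<Sum>j\<in>J. d j + 2 * ((z - p) \<bullet> w j) / d j)
       = (\<Sum>j\<in>J. 2 * (z \<bullet> ((1 / d j) *\<^sub>R w j)) + (d j - 2 * (p \<bullet> w j) / d j))"
      by (rule sum.cong[OF refl]) (simp add: inner_diff_left diff_divide_distrib right_diff_distrib)
    also have "\<dots> = 2 * (z \<bullet> (\<Sum>j\<in>J. (1 / d j) *\<^sub>R w j)) + (\<Sum>j\<in>J. d j - 2 * (p \<bullet> w j) / d j)"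
      by (simp add: sum.distrib inner_sum_right sum_distrib_left)
    finally show ?thesis .
  qed
  show ?thesis unfolding e1 e2 by (simp add: algebra_simps inner_add_right)
qed

lemma sq_shift:
  fixes z c Q :: "'a::real_inner"
  assumes "\<alpha> \<noteq> 0" "c = inverse (2*\<alpha>) *\<^sub>R Q"
  shows "\<alpha>*(norm z)^2 - z \<bullet> Q + K = (\<alpha>*(norm c)^2 - c \<bullet> Q + K) + \<alpha>*(norm (z - c))^2"
proof -
  have Q: "Q = (2*\<alpha>) *\<^sub>R c" using assms by simp
  show ?thesis unfolding Q
    by (simp add: power2_norm_eq_inner inner_diff_left inner_diff_right inner_commute algebra_simps)
qed

lemma amgm:
  fixes a b :: real assumes "a > 0"
  shows "b \<le> b^2/(2*a) + a/2"
proof -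
  have "0 \<le> (b - a)^2" by simp
  hence "2*a*b \<le> b^2 + a^2" by (simp add: power2_eq_square algebra_simps)
  thus ?thesis using assms by (simp add: field_simps power2_eq_square)
qed

lemma remove_diag:
  assumes "i \<in> S" "finite S"
  shows "(\<Sum>j\<in>S - {i}. F j) = (\<Sum>j\<in>S. if i = j then 0 else F j)"
proof -
  have "(\<Sum>j\<in>S. if i = j then 0 else F j) = (if i = i then 0 else F i) + (\<Sum>j\<in>S - {i}. if i = j then 0 else F j)"
    by (rule sum.remove[OF assms(2,1)])
  also have "\<dots> = (\<Sum>j\<in>S - {i}. F j)" by (simp, rule sum.cong) auto
  finally show ?thesis by simp
qed


theorem lemma6:
  fixes y x' :: "nat \<Rightarrow> 'a::euclidean_space" and n N :: nat
  assumes "n \<ge> 1" and "N \<ge> 1"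
    and "inj_on x' {1..n}"
    and "\<forall>i\<in>{1..n}. \<forall>m\<in>{1..N}. x' i \<noteq> y m"
  shows "(\<forall>x. hQ n N y x' x \<ge> Ehat n N y x)
       \<and> hQ n N y x' x' = Ehat n N y x'
       \<and> (\<forall>x. hQ n N y x' (hQ_min n N y x') \<le> hQ n N y x' x)
       \<and> (\<forall>x. (\<forall>z. hQ n N y x' x \<le> hQ n N y x' z) \<longrightarrow> (\<forall>i\<in>{1..n}. x i = hQ_min n N y x' i))"
proof -
  define A :: real where "A = 2 / (real n * real N)"
  define B :: real where "B = 1 / (real n)^2"
  define a where "a i m = norm (y m - x' i)" for i m
  define d where "d i j = norm (x' i - x' j)" for i j
  define w where "w i j = x' i - x' j" for i j
  define T where "T i z = A * (\<Sum>m=1..N. (norm (y m - z))^2 / (2 * a i m) + a i m / 2)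
       - B * (\<Sum>j\<in>{1..n} - {i}. d i j + 2 * ((z - x' i) \<bullet> w i j) / d i j)" for i z
  define S where "S i = (\<Sum>m=1..N. 1 / a i m)" for i
  define \<alpha> where "\<alpha> i = A * S i / 2" for i
  define c where "c = hQ_min n N y x'"
  have Apos: "A > 0" using assms by (simp add: A_def)
  have Bpos: "B > 0" using assms by (simp add: B_def)
  have apos: "\<forall>m\<in>{1..N}. a i m > 0" if "i \<in> {1..n}" for i
  proof
    fix m assume m: "m \<in> {1..N}"
    have "x' i \<noteq> y m" using assms(4) that m by blast
    thus "a i m > 0" by (simp add: a_def)
  qed
  have dpos: "d i j > 0" if "i \<in> {1..n}" "j \<in> {1..n}" "i \<noteq> j" for i j
  proof -
    have "x' i \<noteq> x' j" using assms(3) that unfolding inj_on_def by blast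
    thus ?thesis by (simp add: d_def)
  qed
  have Spos: "S i > 0" if "i \<in> {1..n}" for i
    unfolding S_def using apos[OF that] assms(2)
    by (intro sum_pos) auto
  have hQT: "hQ n N y x' x = (\<Sum>i=1..n. T i (x i))" for x
    unfolding hQ_def T_def A_def[symmetric] B_def[symmetric] a_def d_def w_def
    by (simp add: sum_distrib_left sum_subtractf)
  have key: "T i z = T i (c i) + \<alpha> i * (norm (z - c i))^2" if i: "i \<in> {1..n}" for i z
  proof -
    let ?Q = "A *\<^sub>R (\<Sum>m=1..N. (1 / a i m) *\<^sub>R y m) + (2*B) *\<^sub>R (\<Sum>j\<in>{1..n}-{i}. (1 / d i j) *\<^sub>R w i j)"
    let ?K = "A * (\<Sum>m=1..N. (norm (y m))^2 / (2 * a i m) + a i m / 2)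
          - B * (\<Sum>j\<in>{1..n}-{i}. d i j - 2 * (x' i \<bullet> w i j) / d i j)"
    have ex: "T i v = \<alpha> i * (norm v)^2 - v \<bullet> ?Q + ?K" for v
      unfolding T_def \<alpha>_def S_def
      by (rule expand) (use apos[OF i] in auto)
    have anz: "\<alpha> i \<noteq> 0" using Apos Spos[OF i] by (simp add: \<alpha>_def)
    have ci: "c i = inverse (2 * \<alpha> i) *\<^sub>R ?Q"
    proof -
      have Y: "(\<Sum>m=1..N. (1 / norm (x' i - y m)) *\<^sub>R y m) = (\<Sum>m=1..N. (1 / a i m) *\<^sub>R y m)"
        by (simp add: a_def norm_minus_commute)
      have S': "(\<Sum>m=1..N. inverse (norm (x' i - y m))) = S i"
        by (simp add: S_def a_def norm_minus_commute divide_inverse)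
      have "c i = inverse (S i) *\<^sub>R ((real N / real n) *\<^sub>R (\<Sum>j\<in>{1..n}-{i}. (1 / d i j) *\<^sub>R w i j)
           + (\<Sum>m=1..N. (1 / a i m) *\<^sub>R y m))"
        unfolding c_def hQ_min_def Y S' d_def w_def ..
      also have "\<dots> = inverse (2 * \<alpha> i) *\<^sub>R ?Q"
        using assms Spos[OF i]
        by (simp add: \<alpha>_def A_def B_def scaleR_add_right field_simps power2_eq_square)
      finally show ?thesis .
    qed
    show ?thesis unfolding ex by (rule sq_shift[OF anz ci])
  qed
  have alpha_pos: "\<alpha> i > 0" if "i \<in> {1..n}" for i
    using Apos Spos[OF that] by (simp add: \<alpha>_def)
  have alpha_nn: "0 \<le> \<alpha> i" if "i \<in> {1..n}" for i
    using alpha_pos[OF that] by simp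
  have decomp: "hQ n N y x' x = hQ n N y x' c + (\<Sum>i=1..n. \<alpha> i * (norm (x i - c i))^2)" for x
  proof -
    have "hQ n N y x' x = (\<Sum>i=1..n. T i (c i) + \<alpha> i * (norm (x i - c i))^2)"
      unfolding hQT by (intro sum.cong refl key) auto
    thus ?thesis unfolding hQT by (simp add: sum.distrib)
  qed
  have P3: "\<forall>x. hQ n N y x' c \<le> hQ n N y x' x"
  proof
    fix x
    have "0 \<le> (\<Sum>i=1..n. \<alpha> i * (norm (x i - c i))^2)"
      by (intro sum_nonneg mult_nonneg_nonneg) (auto intro: alpha_nn)
    thus "hQ n N y x' c \<le> hQ n N y x' x" using decomp[of x] by linarith
  qed
  have P4: "\<forall>x. (\<forall>z. hQ n N y x' x \<le> hQ n N y x' z) \<longrightarrow> (\<forall>i\<in>{1..n}. x i = c i)"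
  proof (intro allI impI ballI)
    fix x i assume mn: "\<forall>z. hQ n N y x' x \<le> hQ n N y x' z" and i: "i \<in> {1..n}"
    have nn: "\<forall>i\<in>{1..n}. 0 \<le> \<alpha> i * (norm (x i - c i))^2"
      by (auto intro!: mult_nonneg_nonneg alpha_nn)
    have "(\<Sum>i=1..n. \<alpha> i * (norm (x i - c i))^2) \<le> 0" using mn[rule_format, of c] decomp[of x] by linarith
    moreover have "0 \<le> (\<Sum>i=1..n. \<alpha> i * (norm (x i - c i))^2)" using nn by (intro sum_nonneg) auto
    ultimately have "(\<Sum>i=1..n. \<alpha> i * (norm (x i - c i))^2) = 0" by linarith
    hence "\<forall>i\<in>{1..n}. \<alpha> i * (norm (x i - c i))^2 = 0"
      using sum_nonneg_eq_0_iff[of "{1..n}" "\<lambda>i. \<alpha> i * (norm (x i - c i))^2"] nn by blast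
    hence "\<alpha> i * (norm (x i - c i))^2 = 0" using i by blast
    thus "x i = c i" using alpha_pos[OF i] by simp
  qed
  have hQ_unf: "hQ n N y x' x = A * (\<Sum>i=1..n. \<Sum>m=1..N. (norm (y m - x i))^2 / (2 * a i m) + a i m / 2)
     - B * (\<Sum>i=1..n. \<Sum>j\<in>{1..n} - {i}. d i j + 2 * ((x i - x' i) \<bullet> w i j) / d i j)" for x
    unfolding hQ_def A_def B_def a_def d_def w_def ..
  have E_unf: "Ehat n N y x = A * (\<Sum>i=1..n. \<Sum>m=1..N. norm (y m - x i))
     - B * (\<Sum>i=1..n. \<Sum>j=1..n. norm (x i - x j))" for x
    unfolding Ehat_def A_def B_def ..
  have P1: "\<forall>x. hQ n N y x' x \<ge> Ehat n N y x"
  proof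
    fix x
    have E1: "(\<Sum>i=1..n. \<Sum>m=1..N. norm (y m - x i)) \<le> (\<Sum>i=1..n. \<Sum>m=1..N. (norm (y m - x i))^2 / (2 * a i m) + a i m / 2)"
      by (intro sum_mono amgm) (use apos in auto)
    define f where "f i j = (x i - x' i) \<bullet> w i j / d i j" for i j
    define g where "g i j = (x j - x' j) \<bullet> w i j / d i j" for i j
    have sw: "(\<Sum>i=1..n. \<Sum>j=1..n. if i = j then 0 else f i j) = (\<Sum>i=1..n. \<Sum>j=1..n. if i = j then 0 else - g i j)"
    proof -
      have "(\<Sum>i=1..n. \<Sum>j=1..n. if i = j then 0 else f i j) = (\<Sum>j=1..n. \<Sum>i=1..n. if i = j then 0 else f i j)"
        by (rule sum.swap)
      also have "\<dots> = (\<Sum>i=1..n. \<Sum>j=1..n. if i = j then 0 else - g i j)"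
      proof (intro sum.cong refl)
        fix i j
        show "(if j = i then 0 else f j i) = (if i = j then 0 else - g i j)"
        proof -
          have e: "x' j - x' i = - (x' i - x' j)" by simp
          show ?thesis unfolding f_def g_def w_def d_def e inner_minus_right norm_minus_cancel
            by simp
        qed
      qed
      finally show ?thesis .
    qed
    have L: "(\<Sum>i=1..n. \<Sum>j\<in>{1..n} - {i}. d i j + 2 * ((x i - x' i) \<bullet> w i j) / d i j)
        = (\<Sum>i=1..n. \<Sum>j=1..n. (if i = j then 0 else d i j) + 2 * (if i = j then 0 else f i j))"
    proof (rule sum.cong[OF refl])
      fix i assume i: "i \<in> {1..n}"
      show "(\<Sum>j\<in>{1..n} - {i}. d i j + 2 * ((x i - x' i) \<bullet> w i j) / d i j)
        = (\<Sum>j=1..n. (if i = j then 0 else d i j) + 2 * (if i = j then 0 else f i j))"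
        unfolding remove_diag[OF i finite_atLeastAtMost] by (rule sum.cong) (auto simp: f_def)
    qed
    also have "\<dots> = (\<Sum>i=1..n. \<Sum>j=1..n. if i = j then 0 else d i j)
         + 2 * (\<Sum>i=1..n. \<Sum>j=1..n. if i = j then 0 else f i j)"
      by (simp add: sum.distrib sum_distrib_left)
    also have "\<dots> = (\<Sum>i=1..n. \<Sum>j=1..n. if i = j then 0 else d i j)
         + (\<Sum>i=1..n. \<Sum>j=1..n. if i = j then 0 else f i j) + (\<Sum>i=1..n. \<Sum>j=1..n. if i = j then 0 else - g i j)"
      using sw by simp
    also have "\<dots> = (\<Sum>i=1..n. \<Sum>j=1..n. if i = j then 0 else d i j + f i j - g i j)"
      by (simp add: sum.distrib[symmetric] if_distrib cong: if_cong)
    also have "\<dots> \<le> (\<Sum>i=1..n. \<Sum>j=1..n. norm (x i - x j))"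
    proof (intro sum_mono)
      fix i j assume i: "i \<in> {1..n}" and j: "j \<in> {1..n}"
      show "(if i = j then 0 else d i j + f i j - g i j) \<le> norm (x i - x j)"
      proof (cases "i = j")
        case False
        have dp: "d i j > 0" using dpos[OF i j False] .
        have ww: "w i j \<bullet> w i j = (d i j)^2" by (simp add: d_def w_def power2_norm_eq_inner)
        have wx: "w i j \<bullet> w i j = x' i \<bullet> w i j - x' j \<bullet> w i j"
          by (subst (1) w_def) (simp add: inner_diff_left)
        have "d i j + f i j - g i j = (x i - x j) \<bullet> w i j / d i j"
          using dp ww wx unfolding f_def g_def
          by (simp add: field_simps inner_diff_left power2_eq_square)
        also have "\<dots> \<le> norm (x i - x j) * norm (w i j) / d i j"
          using dp by (intro divide_right_mono) (auto intro: order_trans[OF _ norm_cauchy_schwarz])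
        also have "\<dots> = norm (x i - x j)" using dp by (simp add: d_def w_def)
        finally show ?thesis using False by simp
      qed simp
    qed
    finally have E2: "(\<Sum>i=1..n. \<Sum>j\<in>{1..n} - {i}. d i j + 2 * ((x i - x' i) \<bullet> w i j) / d i j)
        \<le> (\<Sum>i=1..n. \<Sum>j=1..n. norm (x i - x j))" .
    show "hQ n N y x' x \<ge> Ehat n N y x"
      unfolding hQ_unf E_unf
      using mult_left_mono[OF E1, of A] mult_left_mono[OF E2, of B] Apos Bpos by linarith
  qed
  have P2: "hQ n N y x' x' = Ehat n N y x'"
  proof -
    have 1: "(\<Sum>i=1..n. \<Sum>m=1..N. (norm (y m - x' i))^2 / (2 * a i m) + a i m / 2)
       = (\<Sum>i=1..n. \<Sum>m=1..N. norm (y m - x' i))"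
    proof (intro sum.cong refl)
      fix i m assume i: "i \<in> {1..n}" and m: "m \<in> {1..N}"
      have "a i m > 0" using apos[OF i] m by auto
      thus "(norm (y m - x' i))^2 / (2 * a i m) + a i m / 2 = norm (y m - x' i)"
        by (simp add: a_def field_simps power2_eq_square)
    qed
    have 2: "(\<Sum>i=1..n. \<Sum>j\<in>{1..n} - {i}. d i j + 2 * ((x' i - x' i) \<bullet> w i j) / d i j)
       = (\<Sum>i=1..n. \<Sum>j=1..n. norm (x' i - x' j))"
    proof (rule sum.cong[OF refl])
      fix i assume i: "i \<in> {1..n}"
      have "(\<Sum>j\<in>{1..n} - {i}. d i j + 2 * ((x' i - x' i) \<bullet> w i j) / d i j)
          = (\<Sum>j=1..n. if i = j then 0 else norm (x' i - x' j))"
        using i by (simp add: remove_diag d_def)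
      also have "\<dots> = (\<Sum>j=1..n. norm (x' i - x' j))" by (intro sum.cong refl) auto
      finally show "(\<Sum>j\<in>{1..n} - {i}. d i j + 2 * ((x' i - x' i) \<bullet> w i j) / d i j) = (\<Sum>j=1..n. norm (x' i - x' j))" .
    qed
    show ?thesis unfolding hQ_unf E_unf 1 2 ..
  qed
  show ?thesis using P1 P2 P3 P4 unfolding c_def by blast
qed

end
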